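(* For every $n\ge1$, the sum of the coefficients of the degree-one monomials $X_0,X_1,\dots,X_{n-1}$ in the polynomial $\widehat C_n$ equals $(-1)^{n-1}$.
   Context: Polynomials $S_i(n)$: let $a_0,a_1,\dots$ be indeterminates, $a(x)=\sum_{i\ge0}a_ix^i$; for a positive integer $j$ set $G(x)=\prod_{i=0}^{j-1}\frac{1+a(x)x^2}{1+ix}$, $H(x)=\prod_{i=1-j}^{-1}\frac{1+ix}{1+a(x)x^2}$, $u=2j-1$, $v=j(j-1)$. For each $n\ge1$ there are unique $S_0(n),\dots,S_n(n)\in\mathbb{Q}[a_0,\dots,a_{n-2}]$, independent of $j$, with: for every positive integer $j$ the coefficient of $x^{n-1}$ in $\frac{G(x)-H(x)}{x^2}(1+a(x)x^2)$ equals $u(a_{n-1}+S_0(n)+\sum_{i=1}^nS_i(n)v^i)$. Write $S_i(n)(c_1,\dots,c_{n-1})$ for the substitution $a_k=c_{k+1}$. Recursion: $X_0,X_1,\dots$ are indeterminates, $D$ is the $\mathbb{Q}$-linear derivation of $\mathbb{Q}[X_0,X_1,\dots]$ with $D(X_k)=X_{k+1}$, $P_1=X_0$, $P_{m+1}=D(P_m)-3X_0P_m$, and for $m\ge1$ \[\widehat C_m=-S_0(m)(\widehat C_1,\dots,\widehat C_{m-1})+\sum_{i=1}^m3\cdot2^iS_i(m)(\widehat C_1,\dots,\widehat C_{m-1})P_i.\] *)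

theory Defs
  imports "HOL-Library.Poly_Mapping" "HOL-Computational_Algebra.Formal_Power_Series"
begin

(* The same ring is used for Q[a_0,a_1,...]
  and for Q[X_0,X_1,...]. *)

type_synonym mpoly = "(nat \<Rightarrow>\<^sub>0 nat) \<Rightarrow>\<^sub>0 rat"

definition mconst :: "rat \<Rightarrow> mpoly" where
  "mconst c = Poly_Mapping.single 0 c"

definition mvar :: "nat \<Rightarrow> mpoly" where
  "mvar k = Poly_Mapping.single (Poly_Mapping.single k 1) 1"

definition mcoeff :: "mpoly \<Rightarrow> (nat \<Rightarrow>\<^sub>0 nat) \<Rightarrow> rat" where
  "mcoeff p m = Poly_Mapping.lookup p m"

definition vars_in :: "mpoly \<Rightarrow> nat set \<Rightarrow> bool" where
  "vars_in p V \<longleftrightarrow> (\<forall>m\<in>Poly_Mapping.keys p. Poly_Mapping.keys m \<subseteq> V)"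

definition msubst :: "(nat \<Rightarrow> mpoly) \<Rightarrow> mpoly \<Rightarrow> mpoly" where
  "msubst \<sigma> p = (\<Sum>m\<in>Poly_Mapping.keys p. mconst (Poly_Mapping.lookup p m) * (\<Prod>k\<in>Poly_Mapping.keys m. \<sigma> k ^ Poly_Mapping.lookup m k))"

(* The Q-linear derivation D with D(X_k) = X_(k+1), given on each monomial by the
  Leibniz rule. *)
definition mD :: "mpoly \<Rightarrow> mpoly" where
  "mD p = (\<Sum>m\<in>Poly_Mapping.keys p. mconst (Poly_Mapping.lookup p m) *
      (\<Sum>k\<in>Poly_Mapping.keys m. of_nat (Poly_Mapping.lookup m k) * mvar (Suc k) * mvar k ^ (Poly_Mapping.lookup m k - 1)
          * (\<Prod>l\<in>Poly_Mapping.keys m - {k}. mvar l ^ Poly_Mapping.lookup m l)))"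

(* Inverse of a power series (used only for series with constant term 1,
  where it exists and is unique). *)
definition fps_inv1 :: "mpoly fps \<Rightarrow> mpoly fps" where
  "fps_inv1 f = (THE g. f * g = 1)"

definition aser :: "mpoly fps" where
  "aser = Abs_fps mvar"

definition Gser :: "nat \<Rightarrow> mpoly fps" where
  "Gser j = (\<Prod>i\<in>{0..<j}. (1 + aser * fps_X ^ 2) * fps_inv1 (1 + of_nat i * fps_X))"

definition Hser :: "nat \<Rightarrow> mpoly fps" where
  "Hser j = (\<Prod>i\<in>{1 - int j..-1}. (1 + of_int i * fps_X) * fps_inv1 (1 + aser * fps_X ^ 2))"

(* coefficient of x^(n-1) in ((G - H)/x^2) (1 + a(x) x^2); division by x^2 is the
  shift by two (G - H has vanishing coefficients of 1 and x) *)
definition lhs_coeff :: "nat \<Rightarrow> nat \<Rightarrow> mpoly" where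
  "lhs_coeff j n = fps_nth (fps_shift 2 (Gser j - Hser j) * (1 + aser * fps_X ^ 2)) (n - 1)"

definition S_prop :: "nat \<Rightarrow> (nat \<Rightarrow> mpoly) \<Rightarrow> bool" where
  "S_prop n S \<longleftrightarrow>
     (\<forall>i\<le>n. vars_in (S i) {..<n - 1}) \<and> (\<forall>i>n. S i = 0) \<and>
     (\<forall>j::nat. j \<ge> 1 \<longrightarrow>
        lhs_coeff j n = of_nat (2 * j - 1) *
          (mvar (n - 1) + S 0 + (\<Sum>i=1..n. S i * of_nat (j * (j - 1)) ^ i)))"

(* S n i = S_i(n) *)
definition S :: "nat \<Rightarrow> nat \<Rightarrow> mpoly" where
  "S n = (THE T. S_prop n T)"

(* P_m, m >= 1 (P 0 is an unused dummy) *)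
fun P :: "nat \<Rightarrow> mpoly" where
  "P 0 = 0"
| "P (Suc 0) = mvar 0"
| "P (Suc (Suc m)) = mD (P (Suc m)) - 3 * mvar 0 * P (Suc m)"

(* Given cs = [C_1,...,C_(m-1)], compute C_m, substituting a_k := C_(k+1). *)
definition Cstep :: "mpoly list \<Rightarrow> mpoly" where
  "Cstep cs = (let m = Suc (length cs);
                   \<sigma> = (\<lambda>k. if k < length cs then cs ! k else 0)
               in - msubst \<sigma> (S m 0) +
                  (\<Sum>i=1..m. 3 * 2 ^ i * msubst \<sigma> (S m i) * P i))"

primrec Clist :: "nat \<Rightarrow> mpoly list" where
  "Clist 0 = []"
| "Clist (Suc m) = Clist m @ [Cstep (Clist m)]"

definition Chat :: "nat \<Rightarrow> mpoly" where
  "Chat m = Clist m ! (m - 1)"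

end

theory Submission
  imports Defs "HOL-Computational_Algebra.Polynomial"
begin

unbundle fps_syntax


lemma pm_expand: "(p::'a \<Rightarrow>\<^sub>0 'b::comm_monoid_add) = (\<Sum>m\<in>Poly_Mapping.keys p. Poly_Mapping.single m (Poly_Mapping.lookup p m))"
proof (rule poly_mapping_eqI)
  fix k
  show "Poly_Mapping.lookup p k = Poly_Mapping.lookup (\<Sum>m\<in>Poly_Mapping.keys p. Poly_Mapping.single m (Poly_Mapping.lookup p m)) k"
    by (auto simp: lookup_sum lookup_single when_def in_keys_iff)
qed

lemma lookup_mult_keys:
  fixes p q :: mpoly
  shows "Poly_Mapping.lookup (p * q) m =
    (\<Sum>a\<in>Poly_Mapping.keys p. \<Sum>b\<in>Poly_Mapping.keys q. if a + b = m then Poly_Mapping.lookup p a * Poly_Mapping.lookup q b else 0)"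
proof -
  have "p * q = (\<Sum>a\<in>Poly_Mapping.keys p. Poly_Mapping.single a (Poly_Mapping.lookup p a)) *
     (\<Sum>b\<in>Poly_Mapping.keys q. Poly_Mapping.single b (Poly_Mapping.lookup q b))"
    using pm_expand[of p] pm_expand[of q] by simp
  also have "\<dots> = (\<Sum>a\<in>Poly_Mapping.keys p. \<Sum>b\<in>Poly_Mapping.keys q. Poly_Mapping.single (a+b) (Poly_Mapping.lookup p a * Poly_Mapping.lookup q b))"
    by (simp add: sum_product mult_single)
  finally show ?thesis
    by (simp add: lookup_sum lookup_single when_def)
qed

lemma pm_plus_eq_zero: "(a::nat \<Rightarrow>\<^sub>0 nat) + b = 0 \<longleftrightarrow> a = 0 \<and> b = 0"
  by (auto simp: poly_mapping_eq_iff lookup_add fun_eq_iff)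

lemma pm_plus_eq_single: "(a::nat \<Rightarrow>\<^sub>0 nat) + b = Poly_Mapping.single k 1 \<longleftrightarrow>
   (a = 0 \<and> b = Poly_Mapping.single k 1) \<or> (a = Poly_Mapping.single k 1 \<and> b = 0)"
proof
  assume h: "a + b = Poly_Mapping.single k 1"
  have e: "\<And>i. Poly_Mapping.lookup a i + Poly_Mapping.lookup b i = (if i = k then 1 else 0)"
    using h by (metis lookup_add lookup_single_eq lookup_single_not_eq)
  have o: "\<And>i. i \<noteq> k \<Longrightarrow> Poly_Mapping.lookup a i = 0 \<and> Poly_Mapping.lookup b i = 0"
    using e by (metis add_is_0)
  have "Poly_Mapping.lookup a k + Poly_Mapping.lookup b k = 1" using e[of k] by simp
  then have "(Poly_Mapping.lookup a k = 0 \<and> Poly_Mapping.lookup b k = 1) \<or> (Poly_Mapping.lookup a k = 1 \<and> Poly_Mapping.lookup b k = 0)"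
    by linarith
  then show "(a = 0 \<and> b = Poly_Mapping.single k 1) \<or> (a = Poly_Mapping.single k 1 \<and> b = 0)"
  proof
    assume "Poly_Mapping.lookup a k = 0 \<and> Poly_Mapping.lookup b k = 1"
    then have "a = 0 \<and> b = Poly_Mapping.single k 1"
      using o by (auto simp: poly_mapping_eq_iff fun_eq_iff lookup_single when_def) (metis)
    then show ?thesis by blast
  next
    assume "Poly_Mapping.lookup a k = 1 \<and> Poly_Mapping.lookup b k = 0"
    then have "b = 0 \<and> a = Poly_Mapping.single k 1"
      using o by (auto simp: poly_mapping_eq_iff fun_eq_iff lookup_single when_def) (metis)
    then show ?thesis by blast
  qed
qed auto

lemma single_k1_nz [simp]: "Poly_Mapping.single k (1::nat) \<noteq> 0" "Poly_Mapping.single k (Suc 0) \<noteq> 0"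
  by (metis lookup_single_eq lookup_zero one_neq_zero, metis lookup_single_eq lookup_zero one_neq_zero One_nat_def)

lemmas pm_plus_eq_single' = pm_plus_eq_single[simplified]

definition c0 :: "mpoly \<Rightarrow> rat" where "c0 p = Poly_Mapping.lookup p 0"
definition l1 :: "nat \<Rightarrow> mpoly \<Rightarrow> rat" where "l1 k p = Poly_Mapping.lookup p (Poly_Mapping.single k 1)"

lemma c0_mult: "c0 (p * q) = c0 p * c0 q"
proof -
  have "c0 (p * q) = (\<Sum>a\<in>Poly_Mapping.keys p.
      if a = 0 then (\<Sum>b\<in>Poly_Mapping.keys q. if b = 0 then Poly_Mapping.lookup p a * Poly_Mapping.lookup q b else 0) else 0)"
    unfolding c0_def lookup_mult_keys
    apply (intro sum.cong refl)
    subgoal for a by (cases "a = 0") (auto simp: pm_plus_eq_zero)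
    done
  also have "\<dots> = c0 p * c0 q"
    by (simp add: sum.delta c0_def in_keys_iff)
  finally show ?thesis .
qed

lemma l1_mult: "l1 k (p * q) = c0 p * l1 k q + l1 k p * c0 q"
proof -
  let ?e = "Poly_Mapping.single k (1::nat)"
  have "l1 k (p * q) = (\<Sum>a\<in>Poly_Mapping.keys p.
      (if a = 0 then (\<Sum>b\<in>Poly_Mapping.keys q. if b = ?e then Poly_Mapping.lookup p a * Poly_Mapping.lookup q b else 0) else 0)
    + (if a = ?e then (\<Sum>b\<in>Poly_Mapping.keys q. if b = 0 then Poly_Mapping.lookup p a * Poly_Mapping.lookup q b else 0) else 0))"
    unfolding l1_def lookup_mult_keys
    apply (intro sum.cong refl)
    subgoal for a by (cases "a = 0"; cases "a = ?e") (auto simp: pm_plus_eq_single pm_plus_eq_single')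
    done
  also have "\<dots> = c0 p * l1 k q + l1 k p * c0 q"
    by (simp add: sum.distrib sum.delta c0_def l1_def in_keys_iff)
  finally show ?thesis .
qed

lemma c0_add [simp]: "c0 (p + q) = c0 p + c0 q" by (simp add: c0_def lookup_add)
lemma c0_diff [simp]: "c0 (p - q) = c0 p - c0 q" by (simp add: c0_def lookup_minus)
lemma c0_uminus [simp]: "c0 (- p) = - c0 p" by (simp add: c0_def)
lemma c0_zero [simp]: "c0 0 = 0" by (simp add: c0_def)
lemma c0_one [simp]: "c0 1 = 1" by (simp add: c0_def)
lemma c0_sum: "c0 (sum f A) = (\<Sum>x\<in>A. c0 (f x))" by (simp add: c0_def lookup_sum)
lemma l1_add [simp]: "l1 k (p + q) = l1 k p + l1 k q" by (simp add: l1_def lookup_add)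
lemma l1_diff [simp]: "l1 k (p - q) = l1 k p - l1 k q" by (simp add: l1_def lookup_minus)
lemma l1_uminus [simp]: "l1 k (- p) = - l1 k p" by (simp add: l1_def)
lemma l1_zero [simp]: "l1 k 0 = 0" by (simp add: l1_def)
lemma l1_one [simp]: "l1 k 1 = 0" by (simp add: l1_def lookup_one)
lemma l1_sum: "l1 k (sum f A) = (\<Sum>x\<in>A. l1 k (f x))" by (simp add: l1_def lookup_sum)

lemma c0_mconst [simp]: "c0 (mconst c) = c" by (simp add: c0_def mconst_def)
lemma l1_mconst [simp]: "l1 k (mconst c) = 0" by (simp add: l1_def mconst_def lookup_single)
lemma c0_mvar [simp]: "c0 (mvar k) = 0" by (simp add: c0_def mvar_def lookup_single)
lemma l1_mvar [simp]: "l1 q (mvar k) = (if q = k then 1 else 0)"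
  by (simp add: l1_def mvar_def lookup_single when_def) (metis lookup_single_eq lookup_single_not_eq Zero_not_Suc)

lemma mconst_add: "mconst (a + b) = mconst a + mconst b" by (simp add: mconst_def single_add)
lemma mconst_diff: "mconst (a - b) = mconst a - mconst b" by (simp add: mconst_def single_diff)
lemma mconst_mult: "mconst (a * b) = mconst a * mconst b" by (simp add: mconst_def mult_single)
lemma mconst_0 [simp]: "mconst 0 = 0" by (simp add: mconst_def)
lemma mconst_1 [simp]: "mconst 1 = 1" by (simp add: mconst_def)
lemma mconst_of_nat: "mconst (of_nat k) = of_nat k" by (simp add: mconst_def)
lemma mconst_of_int: "mconst (of_int k) = of_int k" by (simp add: mconst_def)
lemma mconst_numeral: "mconst (numeral k) = numeral k" by (simp add: mconst_def)
lemma mconst_power: "mconst (a ^ k) = mconst a ^ k" by (induction k) (simp_all add: mconst_mult)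
lemma mconst_sum: "mconst (sum f A) = (\<Sum>x\<in>A. mconst (f x))"
  by (induction A rule: infinite_finite_induct) (simp_all add: mconst_add)
lemma mconst_uminus: "mconst (- a) = - mconst a" by (simp add: mconst_def single_uminus)

lemma lookup_mconst_mult: "Poly_Mapping.lookup (mconst c * p) m = c * Poly_Mapping.lookup p m"
  by (simp add: mconst_def mult_map_scale_conv_mult[symmetric] map.rep_eq when_def)

lemma c0_of_nat [simp]: "c0 (of_nat k) = of_nat k" by (metis c0_mconst mconst_of_nat)
lemma l1_of_nat [simp]: "l1 q (of_nat k) = 0" by (metis l1_mconst mconst_of_nat)
lemma c0_numeral [simp]: "c0 (numeral k) = numeral k" by (metis c0_mconst mconst_numeral)
lemma l1_numeral [simp]: "l1 q (numeral k) = 0" by (metis l1_mconst mconst_numeral)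

lemma c0_power: "c0 (p ^ e) = c0 p ^ e" by (induction e) (simp_all add: c0_mult)
lemma c0_prod: "c0 (prod f A) = (\<Prod>x\<in>A. c0 (f x))"
  by (induction A rule: infinite_finite_induct) (simp_all add: c0_mult)
lemma c0_mconst_mult [simp]: "c0 (mconst c * p) = c * c0 p" by (simp add: c0_def lookup_mconst_mult)
lemma l1_mconst_mult [simp]: "l1 k (mconst c * p) = c * l1 k p" by (simp add: l1_def lookup_mconst_mult)

definition ord2 :: "mpoly \<Rightarrow> bool" where "ord2 p \<longleftrightarrow> c0 p = 0 \<and> (\<forall>k. l1 k p = 0)"

lemma ord2_mult1: "c0 p = 0 \<Longrightarrow> c0 q = 0 \<Longrightarrow> ord2 (p * q)"
  by (simp add: ord2_def c0_mult l1_mult)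
lemma ord2_multL: "ord2 p \<Longrightarrow> ord2 (p * q)"
  by (simp add: ord2_def c0_mult l1_mult)
lemma ord2_multR: "ord2 q \<Longrightarrow> ord2 (p * q)"
  by (simp add: ord2_def c0_mult l1_mult)

lemma ord2_power: "c0 p = 0 \<Longrightarrow> e \<ge> 2 \<Longrightarrow> ord2 (p ^ e)"
proof (induction e)
  case (Suc e)
  show ?case
  proof (cases "e \<ge> 2")
    case True then show ?thesis using Suc by (simp add: ord2_multR)
  next
    case False
    then have "e = 1" using Suc by simp
    then show ?thesis using Suc by (simp add: ord2_mult1)
  qed
qed simp

lemma ord2_prod: "finite A \<Longrightarrow> (\<And>x. x \<in> A \<Longrightarrow> c0 (f x) = 0) \<Longrightarrow> card A \<ge> 2 \<Longrightarrow> ord2 (prod f A)"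
proof (induction A rule: finite_induct)
  case (insert x F)
  show ?case
  proof (cases "card F \<ge> 2")
    case True then show ?thesis using insert by (simp add: ord2_multR)
  next
    case False
    then have "card F = 1" using insert by simp
    then obtain y where "F = {y}" by (auto simp: card_Suc_eq)
    then show ?thesis using insert by (simp add: ord2_mult1)
  qed
qed simp


lemma single_eq_iff_keys: "(m::nat \<Rightarrow>\<^sub>0 nat) = Poly_Mapping.single k 1 \<longleftrightarrow> Poly_Mapping.keys m = {k} \<and> Poly_Mapping.lookup m k = 1"
proof
  assume "Poly_Mapping.keys m = {k} \<and> Poly_Mapping.lookup m k = 1"
  then have h: "Poly_Mapping.keys m = {k}" "Poly_Mapping.lookup m k = 1" by auto
  show "m = Poly_Mapping.single k 1"
  proof (rule poly_mapping_eqI)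
    fix i show "Poly_Mapping.lookup m i = Poly_Mapping.lookup (Poly_Mapping.single k 1) i"
    proof (cases "i = k")
      case False
      then have "i \<notin> Poly_Mapping.keys m" using h by simp
      then show ?thesis using False by (simp add: in_keys_iff lookup_single_not_eq)
    qed (simp add: h)
  qed
qed simp

lemma c0_msubst:
  assumes "\<And>k. c0 (\<sigma> k) = 0"
  shows "c0 (msubst \<sigma> p) = c0 p"
proof -
  have pr: "c0 (\<Prod>k\<in>Poly_Mapping.keys m. \<sigma> k ^ Poly_Mapping.lookup m k) = (if m = 0 then 1 else 0)" for m :: "nat \<Rightarrow>\<^sub>0 nat"
  proof -
    have "c0 (\<Prod>k\<in>Poly_Mapping.keys m. \<sigma> k ^ Poly_Mapping.lookup m k) = (\<Prod>k\<in>Poly_Mapping.keys m. (0::rat) ^ Poly_Mapping.lookup m k)"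
      by (simp add: c0_prod c0_power assms)
    also have "\<dots> = (\<Prod>k\<in>Poly_Mapping.keys m. 0)"
      by (intro prod.cong refl) (simp add: in_keys_iff)
    also have "\<dots> = (if m = 0 then 1 else 0)"
      by (simp add: card_gt_0_iff)
    finally show ?thesis .
  qed
  have "c0 (msubst \<sigma> p) = (\<Sum>m\<in>Poly_Mapping.keys p. Poly_Mapping.lookup p m * (if m = 0 then 1 else 0))"
    unfolding msubst_def c0_sum by (simp add: pr)
  also have "\<dots> = c0 p"
    by (simp add: sum.delta c0_def in_keys_iff if_distrib cong: if_cong)
  finally show ?thesis .
qed


lemma ord2_sum: "(\<And>x. x \<in> A \<Longrightarrow> ord2 (f x)) \<Longrightarrow> ord2 (sum f A)"
  by (simp add: ord2_def c0_sum l1_sum)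

lemma ord2_mconst_mult: "ord2 p \<Longrightarrow> ord2 (mconst c * p)"
  by (simp add: ord2_def)

lemma ord2_msubst:
  assumes "\<And>k. c0 (\<sigma> k) = 0" and "ord2 p"
  shows "ord2 (msubst \<sigma> p)"
  unfolding msubst_def
proof (intro ord2_sum ord2_mconst_mult)
  fix m assume m: "m \<in> Poly_Mapping.keys p"
  have "m \<noteq> 0" using m assms(2) by (auto simp: ord2_def c0_def in_keys_iff)
  have ns: "m \<noteq> Poly_Mapping.single k 1" for k using m assms(2) by (auto simp: ord2_def l1_def in_keys_iff)
  have cz: "c0 (\<sigma> k ^ Poly_Mapping.lookup m k) = 0" if "k \<in> Poly_Mapping.keys m" for k
    using that by (simp add: c0_power assms in_keys_iff)
  show "ord2 (\<Prod>k\<in>Poly_Mapping.keys m. \<sigma> k ^ Poly_Mapping.lookup m k)"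
  proof (cases "card (Poly_Mapping.keys m) \<ge> 2")
    case True
    then show ?thesis by (intro ord2_prod) (auto simp: cz)
  next
    case False
    have "Poly_Mapping.keys m \<noteq> {}" using \<open>m \<noteq> 0\<close> by simp
    then have "card (Poly_Mapping.keys m) = 1" using False
      by (metis One_nat_def card_0_eq finite_keys less_2_cases not_le)
    then obtain k where k: "Poly_Mapping.keys m = {k}" by (auto simp: card_Suc_eq)
    then have "Poly_Mapping.lookup m k \<noteq> 1" using ns[of k] single_eq_iff_keys by blast
    moreover have "k \<in> Poly_Mapping.keys m" using k by simp
    then have "Poly_Mapping.lookup m k \<noteq> 0" by (simp add: in_keys_iff)
    ultimately have "Poly_Mapping.lookup m k \<ge> 2" by linarith
    then show ?thesis using k by (simp add: ord2_power assms)
  qed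
qed



lemma prod_zero_const: "finite A \<Longrightarrow> (\<Prod>l\<in>A. (0::'a::comm_semiring_1)) = (if A = {} then 1 else 0)"
  by (induction rule: finite_induct) auto

lemma c0_mD: "c0 (mD p) = 0"
  by (simp add: mD_def c0_sum c0_mult)

lemma l1_mD: "l1 q (mD p) = (if q = 0 then 0 else Poly_Mapping.lookup p (Poly_Mapping.single (q - 1) 1))"
proof -
  have trm: "l1 q (of_nat (Poly_Mapping.lookup m k) * mvar (Suc k) * mvar k ^ (Poly_Mapping.lookup m k - 1)
          * (\<Prod>l\<in>Poly_Mapping.keys m - {k}. mvar l ^ Poly_Mapping.lookup m l))
      = (if q = Suc k \<and> m = Poly_Mapping.single k 1 then 1 else 0)"
    if k: "k \<in> Poly_Mapping.keys m" for m k
  proof -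
    have "l1 q (of_nat (Poly_Mapping.lookup m k) * mvar (Suc k) * mvar k ^ (Poly_Mapping.lookup m k - 1)
          * (\<Prod>l\<in>Poly_Mapping.keys m - {k}. mvar l ^ Poly_Mapping.lookup m l))
       = of_nat (Poly_Mapping.lookup m k) * (if q = Suc k then 1 else 0) * 0 ^ (Poly_Mapping.lookup m k - 1)
          * (\<Prod>l\<in>Poly_Mapping.keys m - {k}. 0 ^ Poly_Mapping.lookup m l)"
      by (simp add: l1_mult c0_mult c0_power c0_prod)
    also have "(\<Prod>l\<in>Poly_Mapping.keys m - {k}. (0::rat) ^ Poly_Mapping.lookup m l) = (\<Prod>l\<in>Poly_Mapping.keys m - {k}. 0)"
      by (intro prod.cong refl) (simp add: in_keys_iff)
    also have "\<dots> = (if Poly_Mapping.keys m - {k} = {} then 1 else 0)" by (rule prod_zero_const) simp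
    finally have e: "l1 q (of_nat (Poly_Mapping.lookup m k) * mvar (Suc k) * mvar k ^ (Poly_Mapping.lookup m k - 1)
          * (\<Prod>l\<in>Poly_Mapping.keys m - {k}. mvar l ^ Poly_Mapping.lookup m l))
       = of_nat (Poly_Mapping.lookup m k) * (if q = Suc k then 1 else 0) * 0 ^ (Poly_Mapping.lookup m k - 1)
          * (if Poly_Mapping.keys m - {k} = {} then 1 else 0)" .
    have mk: "Poly_Mapping.lookup m k \<noteq> 0" using k by (simp add: in_keys_iff)
    have iff: "(Poly_Mapping.lookup m k = 1 \<and> Poly_Mapping.keys m - {k} = {}) \<longleftrightarrow> m = Poly_Mapping.single k 1"
      using k single_eq_iff_keys by auto
    show ?thesis
    proof (cases "Poly_Mapping.lookup m k = 1")
      case True then show ?thesis using e iff by auto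
    next
      case False
      then have "(0::rat) ^ (Poly_Mapping.lookup m k - 1) = 0" using mk by simp
      then show ?thesis using e iff False by auto
    qed
  qed
  have inner: "l1 q (\<Sum>k\<in>Poly_Mapping.keys m. of_nat (Poly_Mapping.lookup m k) * mvar (Suc k) * mvar k ^ (Poly_Mapping.lookup m k - 1)
          * (\<Prod>l\<in>Poly_Mapping.keys m - {k}. mvar l ^ Poly_Mapping.lookup m l))
     = (if q \<noteq> 0 \<and> m = Poly_Mapping.single (q - 1) 1 then 1 else 0)" for m
  proof -
    have "l1 q (\<Sum>k\<in>Poly_Mapping.keys m. of_nat (Poly_Mapping.lookup m k) * mvar (Suc k) * mvar k ^ (Poly_Mapping.lookup m k - 1)
          * (\<Prod>l\<in>Poly_Mapping.keys m - {k}. mvar l ^ Poly_Mapping.lookup m l))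
       = (\<Sum>k\<in>Poly_Mapping.keys m. if q = Suc k \<and> m = Poly_Mapping.single k 1 then 1 else 0)"
      unfolding l1_sum by (intro sum.cong refl trm)
    also have "\<dots> = (if q \<noteq> 0 \<and> m = Poly_Mapping.single (q - 1) 1 then 1 else 0)"
    proof (cases "q \<noteq> 0 \<and> m = Poly_Mapping.single (q - 1) 1")
      case True
      then have "Poly_Mapping.keys m = {q - 1}" by simp
      then show ?thesis using True by simp
    next
      case False
      then have n: "\<And>k. \<not> (q = Suc k \<and> m = Poly_Mapping.single k 1)" by auto
      have "(\<Sum>k\<in>Poly_Mapping.keys m. if q = Suc k \<and> m = Poly_Mapping.single k 1 then 1 else 0) = (0::rat)"
        by (rule sum.neutral) (use n in simp)
      then show ?thesis using False by simp
    qed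
    finally show ?thesis .
  qed
  have "l1 q (mD p) = (\<Sum>m\<in>Poly_Mapping.keys p. Poly_Mapping.lookup p m * (if q \<noteq> 0 \<and> m = Poly_Mapping.single (q - 1) 1 then 1 else 0))"
    unfolding mD_def l1_sum l1_mconst_mult
    by (rule sum.cong[OF refl]) (subst inner[unfolded l1_sum], rule refl)
  also have "\<dots> = (if q = 0 then 0 else Poly_Mapping.lookup p (Poly_Mapping.single (q - 1) 1))"
    by (cases "q = 0") (simp_all add: if_distrib sum.delta' in_keys_iff cong: if_cong)
  finally show ?thesis .
qed

lemma c0_P: "c0 (P i) = 0"
  by (induction i rule: P.induct) (simp_all add: c0_mD c0_mult)

lemma l1_P: "l1 q (P (Suc i)) = (if q = i then 1 else 0)"
proof (induction i arbitrary: q)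
  case 0 then show ?case by simp
next
  case (Suc i)
  have "l1 q (P (Suc (Suc i))) = l1 q (mD (P (Suc i)))"
    by (simp add: l1_mult c0_mult c0_P)
  also have "\<dots> = (if q = 0 then 0 else l1 (q - 1) (P (Suc i)))"
    using l1_mD[of q "P (Suc i)"] by (simp add: l1_def)
  also have "\<dots> = (if q = Suc i then 1 else 0)"
    using Suc[of "q - 1"] by auto
  finally show ?case .
qed

definition wt :: "(nat \<Rightarrow>\<^sub>0 nat) \<Rightarrow> nat" where
  "wt m = (\<Sum>k\<in>Poly_Mapping.keys m. Poly_Mapping.lookup m k * (k + 2))"

lemma wt_superset: "finite K \<Longrightarrow> Poly_Mapping.keys m \<subseteq> K \<Longrightarrow> wt m = (\<Sum>k\<in>K. Poly_Mapping.lookup m k * (k + 2))"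
  unfolding wt_def by (rule sum.mono_neutral_left) (auto simp: in_keys_iff)

lemma wt_add: "wt (a + b) = wt a + wt b"
proof -
  let ?K = "Poly_Mapping.keys a \<union> Poly_Mapping.keys b"
  have "wt (a + b) = (\<Sum>k\<in>?K. Poly_Mapping.lookup (a + b) k * (k + 2))"
    by (rule wt_superset) (auto dest: set_mp[OF keys_add])
  also have "\<dots> = (\<Sum>k\<in>?K. Poly_Mapping.lookup a k * (k + 2)) + (\<Sum>k\<in>?K. Poly_Mapping.lookup b k * (k + 2))"
    by (simp add: lookup_add sum.distrib algebra_simps)
  also have "\<dots> = wt a + wt b"
    using wt_superset[of ?K a] wt_superset[of ?K b] by simp
  finally show ?thesis .
qed

lemma wt_zero [simp]: "wt 0 = 0" by (simp add: wt_def)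
lemma wt_single [simp]: "wt (Poly_Mapping.single k 1) = k + 2" by (simp add: wt_def)

definition WB :: "nat \<Rightarrow> mpoly \<Rightarrow> bool" where
  "WB N p \<longleftrightarrow> (\<forall>m\<in>Poly_Mapping.keys p. wt m \<le> N)"

lemma WB_mult: "WB a p \<Longrightarrow> WB b q \<Longrightarrow> WB (a + b) (p * q)"
  unfolding WB_def using keys_mult[of p q] by (force simp: wt_add intro: add_mono)
lemma WB_add: "WB N p \<Longrightarrow> WB N q \<Longrightarrow> WB N (p + q)"
  unfolding WB_def using keys_add[of p q] by blast
lemma WB_diff: "WB N p \<Longrightarrow> WB N q \<Longrightarrow> WB N (p - q)"
  unfolding WB_def using keys_diff[of p q] by blast
lemma WB_zero [simp]: "WB N 0" by (simp add: WB_def)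
lemma WB_sum: "(\<And>x. x \<in> A \<Longrightarrow> WB N (f x)) \<Longrightarrow> WB N (sum f A)"
  by (induction A rule: infinite_finite_induct) (simp_all add: WB_add)
lemma WB_mono: "WB a p \<Longrightarrow> a \<le> b \<Longrightarrow> WB b p"
  by (auto simp: WB_def)
lemma WB_mconst [simp]: "WB N (mconst c)"
  by (simp add: WB_def mconst_def)
lemma WB_mconst_mult: "WB N p \<Longrightarrow> WB N (mconst c * p)"
  by (auto simp: WB_def in_keys_iff lookup_mconst_mult)
lemma WB_mvar: "WB (k + 2) (mvar k)"
  by (simp add: WB_def mvar_def wt_def)

lemma big_var:
  assumes "wt m \<le> n + 1" "k \<in> Poly_Mapping.keys m" "n - 1 \<le> k" "n \<ge> 1"
  shows "m = Poly_Mapping.single (n - 1) 1"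
proof -
  have fin: "finite (Poly_Mapping.keys m)" by simp
  have split: "wt m = Poly_Mapping.lookup m k * (k + 2) + (\<Sum>l\<in>Poly_Mapping.keys m - {k}. Poly_Mapping.lookup m l * (l + 2))"
    unfolding wt_def using assms(2) fin by (simp add: sum.remove)
  have mk: "Poly_Mapping.lookup m k \<ge> 1" using assms(2) by (simp add: in_keys_iff)
  then have "1 * (k + 2) \<le> Poly_Mapping.lookup m k * (k + 2)" by (rule mult_le_mono1)
  then have "Poly_Mapping.lookup m k * (k + 2) \<ge> k + 2" by simp
  then have A: "Poly_Mapping.lookup m k * (k + 2) = k + 2" and B: "k = n - 1"
    and C: "(\<Sum>l\<in>Poly_Mapping.keys m - {k}. Poly_Mapping.lookup m l * (l + 2)) = 0"
    using split assms by linarith+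
  from A have "Poly_Mapping.lookup m k * (k + 2) = 1 * (k + 2)" by simp
  then have "Poly_Mapping.lookup m k = 1" by (subst (asm) mult_cancel2) simp
  moreover have "Poly_Mapping.keys m - {k} = {}"
  proof (rule ccontr)
    assume "Poly_Mapping.keys m - {k} \<noteq> {}"
    then obtain l where l: "l \<in> Poly_Mapping.keys m - {k}" by blast
    then have "Poly_Mapping.lookup m l * (l + 2) = 0" using C fin by simp
    then show False using l by (simp add: in_keys_iff)
  qed
  ultimately show ?thesis using assms(2) B single_eq_iff_keys by auto
qed


fun qa :: "nat \<Rightarrow> rat poly" where
  "qa 0 = 0"
| "qa (Suc 0) = 1"
| "qa (Suc (Suc d)) = qa (Suc d) + [:0, 1:] * qa d"

lemma qa_eval: "x ^ d - (1 - x) ^ d = (2 * x - 1) * poly (qa d) (x * (x - 1))"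
proof (induction d rule: qa.induct)
  case (3 d)
  have "x ^ Suc (Suc d) - (1 - x) ^ Suc (Suc d) = (x ^ Suc d - (1 - x) ^ Suc d) + x * (x - 1) * (x ^ d - (1 - x) ^ d)"
    by (simp add: algebra_simps)
  also have "\<dots> = (2 * x - 1) * poly (qa (Suc d)) (x * (x - 1)) + x * (x - 1) * ((2 * x - 1) * poly (qa d) (x * (x - 1)))"
    using 3 by simp
  also have "\<dots> = (2 * x - 1) * poly (qa (Suc (Suc d))) (x * (x - 1))"
    by (simp add: algebra_simps)
  finally show ?case .
qed simp_all

lemma qa_deg: "degree (qa d) \<le> (d - 1) div 2"
proof (induction d rule: qa.induct)
  case (3 d)
  have "degree (qa (Suc (Suc d))) \<le> max (degree (qa (Suc d))) (degree ([:0, 1:] * qa d))"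
    by (simp add: degree_add_le)
  moreover have "degree ([:0, 1:] * qa d) \<le> 1 + degree (qa d)"
    using degree_mult_le[of "[:0, 1:]" "qa d"] by simp
  ultimately show ?case using 3 by (cases d) auto
qed simp_all

definition Qa :: "rat poly \<Rightarrow> rat poly" where
  "Qa p = (\<Sum>d\<le>degree p. smult (coeff p d) (qa d))"

lemma Qa_eval: "poly p x - poly p (1 - x) = (2 * x - 1) * poly (Qa p) (x * (x - 1))"
proof -
  have "poly p x - poly p (1 - x) = (\<Sum>d\<le>degree p. coeff p d * (x ^ d - (1 - x) ^ d))"
    by (simp add: poly_altdef sum_subtractf algebra_simps)
  also have "\<dots> = (\<Sum>d\<le>degree p. coeff p d * ((2 * x - 1) * poly (qa d) (x * (x - 1))))"
    by (simp add: qa_eval)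
  also have "\<dots> = (2 * x - 1) * poly (Qa p) (x * (x - 1))"
    by (simp add: Qa_def poly_sum sum_distrib_left algebra_simps)
  finally show ?thesis .
qed

lemma Qa_deg: "degree p \<le> 2 * n + 2 \<Longrightarrow> degree (Qa p) \<le> n"
  unfolding Qa_def
proof (intro degree_sum_le)
  fix d assume "degree p \<le> 2 * n + 2" "d \<in> {..degree p}"
  then have "(d - 1) div 2 \<le> n" by auto
  then show "degree (smult (coeff p d) (qa d)) \<le> n"
    using qa_deg[of d] degree_smult_le[of "coeff p d" "qa d"] by linarith
qed simp

definition ADprop :: "rat poly \<Rightarrow> rat poly \<Rightarrow> bool" where
  "ADprop p q \<longleftrightarrow> (\<forall>x. poly q (x + 1) - poly q x = poly p x) \<and> poly q 0 = 0 \<and> degree q \<le> degree p + 1"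

lemma mono_AD: "\<exists>F::rat poly. (\<forall>x. poly F (x + 1) - poly F x = x ^ d) \<and> poly F 0 = 0 \<and> degree F \<le> d + 1"
proof (induction d rule: less_induct)
  case (less d)
  have "\<forall>i. \<exists>F::rat poly. i < d \<longrightarrow> (\<forall>x. poly F (x + 1) - poly F x = x ^ i) \<and> poly F 0 = 0 \<and> degree F \<le> i + 1"
    using less by blast
  from choice[OF this] obtain Fs :: "nat \<Rightarrow> rat poly" where Fs0: "\<forall>i. i < d \<longrightarrow> (\<forall>x. poly (Fs i) (x + 1) - poly (Fs i) x = x ^ i) \<and> poly (Fs i) 0 = 0 \<and> degree (Fs i) \<le> i + 1"
    by blast
  then have Fs: "\<And>i. i < d \<Longrightarrow> (\<forall>x. poly (Fs i) (x + 1) - poly (Fs i) x = x ^ i) \<and> poly (Fs i) 0 = 0 \<and> degree (Fs i) \<le> i + 1"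
    by blast
  define F where "F = smult (1 / of_nat (Suc d)) (monom 1 (Suc d) - (\<Sum>i<d. smult (of_nat (Suc d choose i)) (Fs i)))"
  have bin: "(x + 1) ^ Suc d = (\<Sum>i<d. of_nat (Suc d choose i) * x ^ i) + of_nat (Suc d) * x ^ d + x ^ Suc d" for x :: rat
  proof -
    have "(x + 1) ^ Suc d = (\<Sum>i<Suc (Suc d). of_nat (Suc d choose i) * x ^ i)"
      using binomial_ring[of x 1 "Suc d"] by (simp add: lessThan_Suc_atMost)
    then show ?thesis by simp
  qed
  have "poly F (x + 1) - poly F x = x ^ d" for x :: rat
  proof -
    have "poly F (x + 1) - poly F x = (1 / of_nat (Suc d)) * (((x + 1) ^ Suc d - x ^ Suc d) -
        (\<Sum>i<d. of_nat (Suc d choose i) * (poly (Fs i) (x + 1) - poly (Fs i) x)))"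
      by (simp add: F_def poly_sum poly_monom algebra_simps sum_subtractf sum_distrib_left)
    also have "(\<Sum>i<d. of_nat (Suc d choose i) * (poly (Fs i) (x + 1) - poly (Fs i) x)) = (\<Sum>i<d. of_nat (Suc d choose i) * x ^ i)"
      using Fs by (intro sum.cong refl) simp
    also have "((x + 1) ^ Suc d - x ^ Suc d) - (\<Sum>i<d. of_nat (Suc d choose i) * x ^ i) = of_nat (Suc d) * x ^ d"
      by (simp only: bin)
    finally have "poly F (x + 1) - poly F x = (1 / of_nat (Suc d)) * (of_nat (Suc d) * x ^ d)" .
    also have "\<dots> = x ^ d" by (simp del: of_nat_Suc)
    finally show ?thesis .
  qed
  moreover have "poly F 0 = 0"
    using Fs by (simp add: F_def poly_sum poly_monom)
  moreover have "degree F \<le> d + 1"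
  proof -
    have "degree (\<Sum>i<d. smult (of_nat (Suc d choose i)) (Fs i)) \<le> d + 1"
    proof (rule degree_sum_le)
      fix i assume "i \<in> {..<d}"
      then show "degree (smult (of_nat (Suc d choose i)) (Fs i)) \<le> d + 1"
      proof -
        have "i < d" using \<open>i \<in> {..<d}\<close> by simp
        then have "degree (Fs i) \<le> d + 1" using Fs[of i] by simp
        then show ?thesis using degree_smult_le[of "of_nat (Suc d choose i)" "Fs i"] by linarith
      qed
    qed simp
    then have "degree (monom (1::rat) (Suc d) - (\<Sum>i<d. smult (of_nat (Suc d choose i)) (Fs i))) \<le> d + 1"
      using degree_diff_le[of "monom (1::rat) (Suc d)" "d + 1"] degree_monom_le[of "1::rat" "Suc d"] by simp
    then show ?thesis unfolding F_def using degree_smult_le order_trans by blast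
  qed
  ultimately show ?case by blast
qed

lemma AD_exists: "\<exists>q. ADprop p q"
proof -
  have "\<forall>d. \<exists>F::rat poly. (\<forall>x. poly F (x + 1) - poly F x = x ^ d) \<and> poly F 0 = 0 \<and> degree F \<le> d + 1"
    using mono_AD by blast
  then obtain F :: "nat \<Rightarrow> rat poly" where F0: "\<forall>d. (\<forall>x. poly (F d) (x + 1) - poly (F d) x = x ^ d) \<and> poly (F d) 0 = 0 \<and> degree (F d) \<le> d + 1"
    by (rule choice[THEN exE]) blast
  then have F: "\<And>d. (\<forall>x. poly (F d) (x + 1) - poly (F d) x = x ^ d) \<and> poly (F d) 0 = 0 \<and> degree (F d) \<le> d + 1"
    by blast
  define q where "q = (\<Sum>d\<le>degree p. smult (coeff p d) (F d))"
  have "poly q (x + 1) - poly q x = poly p x" for x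
  proof -
    have "poly q (x + 1) - poly q x = (\<Sum>d\<le>degree p. coeff p d * (poly (F d) (x + 1) - poly (F d) x))"
      by (simp add: q_def poly_sum sum_subtractf algebra_simps)
    also have "\<dots> = poly p x" using F by (simp add: poly_altdef)
    finally show ?thesis .
  qed
  moreover have "poly q 0 = 0" using F by (simp add: q_def poly_sum)
  moreover have "degree q \<le> degree p + 1"
    unfolding q_def
  proof (rule degree_sum_le)
    fix d assume "d \<in> {..degree p}"
    then show "degree (smult (coeff p d) (F d)) \<le> degree p + 1"
      using F[of d] degree_smult_le[of "coeff p d" "F d"] by auto
  qed simp
  ultimately show ?thesis unfolding ADprop_def by blast
qed

definition AD :: "rat poly \<Rightarrow> rat poly" where "AD p = (SOME q. ADprop p q)"

lemma AD: "ADprop p (AD p)"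
  unfolding AD_def using AD_exists by (rule someI_ex)

primrec psi :: "nat \<Rightarrow> rat poly" where
  "psi 0 = 1"
| "psi (Suc l) = AD (- ([:0, 1:] * pcompose (psi l) [:1, 1:]))"

lemma psi_rec: "poly (psi (Suc l)) (x + 1) - poly (psi (Suc l)) x = - x * poly (psi l) (x + 1)"
proof -
  have e: "poly (- ([:0, 1:] * pcompose (psi l) [:1, 1:])) x = - x * poly (psi l) (x + 1)"
    by (simp add: poly_pcompose add.commute)
  have "poly (psi (Suc l)) (x + 1) - poly (psi (Suc l)) x = poly (- ([:0, 1:] * pcompose (psi l) [:1, 1:])) x"
    using AD[of "- ([:0, 1:] * pcompose (psi l) [:1, 1:])"] unfolding ADprop_def psi.simps by blast
  then show ?thesis using e by simp
qed

lemma psi_zero: "poly (psi l) 0 = (if l = 0 then 1 else 0)"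
  by (cases l) (use AD in \<open>simp_all add: ADprop_def\<close>)

lemma psi_deg: "degree (psi l) \<le> 2 * l"
proof (induction l)
  case (Suc l)
  have "degree (- ([:0, 1:] * pcompose (psi l) [:1, 1::rat:])) \<le> 1 + degree (psi l)"
    using degree_mult_le[of "[:0, 1::rat:]" "pcompose (psi l) [:1, 1:]"] by (simp add: degree_pcompose)
  then show ?case using Suc AD[of "- ([:0, 1:] * pcompose (psi l) [:1, 1:])"]
    by (simp add: ADprop_def)
qed simp

lemma psi_one: "poly (psi l) 1 = poly (psi l) 0"
proof (cases l)
  case (Suc k) then show ?thesis using psi_rec[of k 0] by simp
qed simp

lemma psi_two: "poly (psi l) 2 = (-1) ^ l"
proof (induction l)
  case (Suc l)
  have "poly (psi (Suc l)) 2 = poly (psi (Suc l)) 1 - poly (psi l) 2"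
    using psi_rec[of l 1] by (simp add: algebra_simps)
  also have "\<dots> = - poly (psi l) 2" using psi_one[of "Suc l"] psi_zero[of "Suc l"] by simp
  finally show ?case using Suc by simp
qed simp

lemma psi_mone: "poly (psi (Suc l)) (-1) = (if l = 0 then -1 else 0)"
  using psi_rec[of l "-1"] psi_zero[of "Suc l"] psi_zero[of l] by (cases "l = 0") (simp_all del: psi.simps)

definition Bp :: "nat \<Rightarrow> rat poly" where
  "Bp k = smult (1 / fact k) (\<Prod>i<k. [:- of_nat i, 1:])"

lemma Bp_eval: "poly (Bp k) x = x gchoose k"
proof -
  have "(x gchoose k) * fact k = (\<Prod>i = 0..<k. x - of_nat i)" by (rule gbinomial_mult_fact')
  then have "x gchoose k = (\<Prod>i<k. x - of_nat i) / fact k"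
    by (simp add: atLeast0LessThan field_simps)
  then show ?thesis by (simp add: Bp_def poly_prod)
qed

lemma Bp_deg: "degree (Bp k) \<le> k"
proof -
  have "degree (\<Prod>i<k. [:- of_nat i, 1::rat:]) \<le> (\<Sum>i<k. degree [:- of_nat i, 1::rat:])"
    using degree_prod_sum_le[of "{..<k}" "\<lambda>i. [:- of_nat i, 1::rat:]"] by (simp add: o_def)
  also have "\<dots> = k" by simp
  finally show ?thesis unfolding Bp_def using degree_smult_le order_trans by blast
qed



definition Y :: "mpoly fps" where "Y = aser * fps_X ^ 2"
definition AA :: "mpoly fps" where "AA = 1 + aser * fps_X ^ 2"

lemma AA_Y: "AA = 1 + Y" by (simp add: AA_def Y_def)

lemma Y_nth: "Y $ i = (if i \<ge> 2 then mvar (i - 2) else 0)"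
  by (simp add: Y_def fps_X_power_mult_right_nth aser_def)

lemma Y_pow_nth_low: "i < k \<Longrightarrow> (Y ^ k) $ i = 0"
proof -
  assume "i < k"
  have "Y ^ k = aser ^ k * (fps_X ^ 2) ^ k"
    by (simp only: Y_def power_mult_distrib)
  also have "(fps_X ^ 2) ^ k = (fps_X :: mpoly fps) ^ (2 * k)"
    by (simp only: power_mult)
  finally have "Y ^ k = aser ^ k * fps_X ^ (2 * k)" .
  moreover have "i < 2 * k" using \<open>i < k\<close> by simp
  ultimately show ?thesis by (simp only: fps_X_power_mult_right_nth if_True)
qed

lemma fps_mult_nth_trunc:
  assumes "\<And>i. i \<le> N \<Longrightarrow> f $ i = g $ i"
  shows "(f * h) $ N = (g * h) $ N"
  unfolding fps_mult_nth using assms by (intro sum.cong refl) simp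

definition cb :: "int \<Rightarrow> nat \<Rightarrow> mpoly fps" where
  "cb t k = fps_const (mconst (of_int t gchoose k))"

definition ThM :: "int \<Rightarrow> nat \<Rightarrow> mpoly fps" where
  "ThM t M = (\<Sum>k\<le>M. cb t k * Y ^ k)"

definition Th :: "int \<Rightarrow> mpoly fps" where
  "Th t = Abs_fps (\<lambda>N. ThM t N $ N)"

lemma ThM_stable: "N \<le> M \<Longrightarrow> ThM t M $ N = ThM t N $ N"
proof (induction M)
  case (Suc M)
  show ?case
  proof (cases "N \<le> M")
    case True
    have "ThM t (Suc M) = ThM t M + cb t (Suc M) * Y ^ Suc M"
      by (simp only: ThM_def sum.atMost_Suc)
    moreover have "(Y ^ Suc M) $ N = 0" using True by (intro Y_pow_nth_low) simp
    moreover have "(cb t (Suc M) * Y ^ Suc M) $ N = 0"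
      unfolding cb_def fps_mult_left_const_nth using calculation(2) by simp
    ultimately have "ThM t (Suc M) $ N = ThM t M $ N"
      by simp
    then show ?thesis using Suc.IH True by metis
  next
    case False then have "N = Suc M" using Suc by simp
    then show ?thesis by simp
  qed
qed simp

lemma Th_nth: "N \<le> M \<Longrightarrow> Th t $ N = ThM t M $ N"
  unfolding Th_def fps_nth_Abs_fps by (rule ThM_stable[symmetric])

lemma cb_rec: "cb (t + 1) (Suc k) = cb t k + cb t (Suc k)"
proof -
  have "(of_int (t + 1) :: rat) gchoose Suc k = (of_int t gchoose k) + (of_int t gchoose Suc k)"
    using gbinomial_Suc_Suc[of "of_int t :: rat" k] by simp
  then show ?thesis by (simp add: cb_def mconst_add)
qed

lemma cb_0 [simp]: "cb t 0 = 1" by (simp add: cb_def fps_const_1_eq_1)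

lemma ThM_rec: "ThM t M * (1 + Y) = ThM (t + 1) (Suc M) - cb t (Suc M) * Y ^ Suc M"
proof (induction M)
  case 0
  have "cb (t + 1) 1 = cb t 0 + cb t 1" using cb_rec[of t 0] by simp
  then show ?case by (simp add: ThM_def algebra_simps)
next
  case (Suc M)
  have "ThM t (Suc M) * (1 + Y) = ThM t M * (1 + Y) + cb t (Suc M) * Y ^ Suc M * (1 + Y)"
    by (simp add: ThM_def algebra_simps)
  also have "\<dots> = ThM (t + 1) (Suc M) + cb t (Suc M) * Y ^ Suc (Suc M)"
    using Suc by (simp add: algebra_simps)
  also have "\<dots> = ThM (t + 1) (Suc (Suc M)) - cb t (Suc (Suc M)) * Y ^ Suc (Suc M)"
    using cb_rec[of t "Suc M"] by (simp add: ThM_def algebra_simps)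
  finally show ?case .
qed

lemma Th_rec: "Th (t + 1) = Th t * (1 + Y)"
proof (rule fps_ext)
  fix N
  have "(Th t * (1 + Y)) $ N = (ThM t N * (1 + Y)) $ N"
    by (rule fps_mult_nth_trunc) (simp add: Th_nth)
  also have "\<dots> = ThM (t + 1) (Suc N) $ N"
    by (simp add: ThM_rec cb_def Y_pow_nth_low del: power_Suc)
  also have "\<dots> = Th (t + 1) $ N" by (rule Th_nth[symmetric]) simp
  finally show "Th (t + 1) $ N = (Th t * (1 + Y)) $ N" ..
qed

lemma Th_0: "Th 0 = 1"
proof (rule fps_ext)
  fix N
  have "ThM 0 N = 1"
    unfolding ThM_def cb_def by (simp add: gbinomial_0_left sum.atMost_shift del: sum.atMost_Suc)
  then show "Th 0 $ N = 1 $ N" by (simp add: Th_def)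
qed

definition Ps :: "int \<Rightarrow> mpoly fps" where
  "Ps t = Abs_fps (\<lambda>l. mconst (poly (psi l) (of_int t)))"

lemma Ps_rec: "Ps (t + 1) * (1 + of_int t * fps_X) = Ps t"
proof (rule fps_ext)
  fix N
  have "(Ps (t + 1) * (1 + of_int t * fps_X)) $ N = Ps (t + 1) $ N + of_int t * (fps_X * Ps (t + 1)) $ N"
    by (simp add: algebra_simps fps_of_int[symmetric])
  also have "\<dots> = Ps t $ N"
  proof (cases N)
    case 0 then show ?thesis by (simp add: Ps_def)
  next
    case (Suc l)
    have "poly (psi (Suc l)) (of_int t + 1) - poly (psi (Suc l)) (of_int t) = - of_int t * poly (psi l) (of_int t + 1)"
      by (rule psi_rec)
    then have "poly (psi (Suc l)) (of_int t + 1) + of_int t * poly (psi l) (of_int t + 1) = poly (psi (Suc l)) (of_int t)"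
      by (simp add: algebra_simps)
    then have "mconst (poly (psi (Suc l)) (of_int t + 1)) + of_int t * mconst (poly (psi l) (of_int t + 1)) = mconst (poly (psi (Suc l)) (of_int t))"
      by (metis mconst_add mconst_mult mconst_of_int)
    then show ?thesis using Suc by (simp add: Ps_def del: psi.simps)
  qed
  finally show "(Ps (t + 1) * (1 + of_int t * fps_X)) $ N = Ps t $ N" .
qed

lemma Ps_0: "Ps 0 = 1"
  by (rule fps_ext) (simp add: Ps_def psi_zero del: psi.simps)

definition Phi :: "int \<Rightarrow> mpoly fps" where "Phi t = Th t * Ps t"

lemma Phi_rec: "Phi (t + 1) * (1 + of_int t * fps_X) = Phi t * (1 + Y)"
proof -
  have "Phi (t + 1) * (1 + of_int t * fps_X) = Th (t + 1) * (Ps (t + 1) * (1 + of_int t * fps_X))"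
    by (simp add: Phi_def mult.assoc)
  also have "\<dots> = Th t * (1 + Y) * Ps t" by (simp add: Th_rec Ps_rec)
  finally show ?thesis by (simp add: Phi_def mult_ac)
qed

lemma Phi_0: "Phi 0 = 1" by (simp add: Phi_def Th_0 Ps_0)

lemma fps_inv1: assumes "f $ 0 = 1" shows "f * fps_inv1 f = 1"
proof -
  have ex: "f * fps_right_inverse f 1 = 1" by (rule fps_right_inverse) (simp add: assms)
  have "fps_inv1 f = fps_right_inverse f 1"
    unfolding fps_inv1_def
  proof (rule the_equality)
    fix g assume "f * g = 1"
    then have "g = g * (f * fps_right_inverse f 1)" using ex by simp
    also have "\<dots> = (f * g) * fps_right_inverse f 1" by (simp add: mult_ac)
    finally show "g = fps_right_inverse f 1" using \<open>f * g = 1\<close> by simp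
  qed (rule ex)
  then show ?thesis using ex by simp
qed

lemma Gser_Phi: "Gser j = Phi (int j)"
proof (induction j)
  case 0 then show ?case by (simp add: Gser_def Phi_0)
next
  case (Suc j)
  have inv: "(1 + of_nat j * fps_X) * fps_inv1 (1 + of_nat j * fps_X) = (1 :: mpoly fps)"
    by (rule fps_inv1) simp
  have "Gser (Suc j) = Phi (int j) * ((1 + aser * fps_X ^ 2) * fps_inv1 (1 + of_nat j * fps_X))"
    using Suc by (simp add: Gser_def)
  also have "\<dots> = Phi (int j) * (1 + Y) * fps_inv1 (1 + of_nat j * fps_X)"
    by (simp add: Y_def mult.assoc)
  also have "\<dots> = Phi (int j + 1) * ((1 + of_nat j * fps_X) * fps_inv1 (1 + of_nat j * fps_X))"
    using Phi_rec[of "int j"] by (simp add: mult.assoc)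
  also have "\<dots> = Phi (int (Suc j))" using inv by (simp add: add.commute)
  finally show ?case .
qed

lemma Hser_Phi_aux: "Hser (Suc j) = Phi (- int j)"
proof (induction j)
  case 0 then show ?case by (simp add: Hser_def Phi_0)
next
  case (Suc j)
  have inv: "(1 + Y) * fps_inv1 (1 + Y) = 1"
    by (rule fps_inv1) (simp add: Y_nth)
  have set: "{1 - int (Suc (Suc j))..-1} = insert (- int (Suc j)) {1 - int (Suc j)..-1}" by auto
  have "Hser (Suc (Suc j)) = (1 + of_int (- int (Suc j)) * fps_X) * fps_inv1 (1 + Y) * Hser (Suc j)"
    unfolding Hser_def set by (subst prod.insert) (auto simp: Y_def)
  also have "\<dots> = fps_inv1 (1 + Y) * (Phi (- int (Suc j) + 1) * (1 + of_int (- int (Suc j)) * fps_X))"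
    using Suc by (simp add: mult_ac)
  also have "\<dots> = fps_inv1 (1 + Y) * (1 + Y) * Phi (- int (Suc j))"
    by (simp only: Phi_rec) (simp add: mult_ac)
  also have "\<dots> = Phi (- int (Suc j))" using inv by (simp add: mult_ac)
  finally show ?case .
qed

lemma Hser_Phi: "j \<ge> 1 \<Longrightarrow> Hser j = Phi (1 - int j)"
  using Hser_Phi_aux[of "j - 1"] by (cases j) auto



lemma poly_psi0 [simp]: "poly (psi 0) x = 1" by simp
declare psi.simps[simp del]

lemma sum_ind: "(\<Sum>k\<le>(i::nat). (f k :: rat) * (if k = a \<and> Q then 1 else 0)) = (if a \<le> i \<and> Q then f a else 0)"
proof -
  have "(\<Sum>k\<le>i. f k * (if k = a \<and> Q then 1 else 0)) = (\<Sum>k\<le>i. if k = a then (if Q then f k else 0) else 0)"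
    by (intro sum.cong refl) auto
  also have "\<dots> = (if a \<le> i \<and> Q then f a else 0)" by (cases Q) auto
  finally show ?thesis .
qed

lemma Phi_nth: "Phi t $ N = (\<Sum>i\<le>N. \<Sum>k\<le>i. mconst (poly (Bp k * psi (N - i)) (of_int t)) * (Y ^ k $ i))"
proof -
  have "Phi t $ N = (\<Sum>i\<le>N. Th t $ i * Ps t $ (N - i))"
    by (simp add: Phi_def fps_mult_nth atLeast0AtMost)
  also have "\<dots> = (\<Sum>i\<le>N. (\<Sum>k\<le>i. mconst (of_int t gchoose k) * (Y ^ k $ i)) * mconst (poly (psi (N - i)) (of_int t)))"
  proof (intro sum.cong refl)
    fix i
    have "Th t $ i = (\<Sum>k\<le>i. mconst (of_int t gchoose k) * (Y ^ k $ i))"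
      using Th_nth[of i i t] by (simp add: ThM_def fps_sum_nth cb_def)
    then show "Th t $ i * Ps t $ (N - i) = (\<Sum>k\<le>i. mconst (of_int t gchoose k) * (Y ^ k $ i)) * mconst (poly (psi (N - i)) (of_int t))"
      by (simp add: Ps_def)
  qed
  also have "\<dots> = (\<Sum>i\<le>N. \<Sum>k\<le>i. mconst (poly (Bp k * psi (N - i)) (of_int t)) * (Y ^ k $ i))"
    by (simp add: sum_distrib_right sum_distrib_left Bp_eval mconst_mult mult_ac)
  finally show ?thesis .
qed

lemma c0_Y: "c0 (Y $ i) = 0" by (simp add: Y_nth)
lemma l1_Y: "l1 q (Y $ i) = (if i = q + 2 then 1 else 0)" by (auto simp: Y_nth)

lemma c0_Ypow: "c0 (Y ^ k $ i) = (if k = 0 \<and> i = 0 then 1 else 0)"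
proof (cases k)
  case 0 then show ?thesis by simp
next
  case (Suc k')
  have "c0 (Y ^ k $ i) = (\<Sum>a\<in>{0..i}. c0 (Y $ a) * c0 (Y ^ k' $ (i - a)))"
    by (simp add: Suc fps_mult_nth c0_sum c0_mult)
  also have "\<dots> = 0" by (simp add: c0_Y)
  finally show ?thesis using Suc by simp
qed

lemma l1_Ypow: "l1 q (Y ^ k $ i) = (if k = 1 \<and> i = q + 2 then 1 else 0)"
proof (cases k)
  case 0 then show ?thesis by simp
next
  case (Suc k')
  have "l1 q (Y ^ k $ i) = (\<Sum>a\<in>{0..i}. c0 (Y $ a) * l1 q (Y ^ k' $ (i - a)) + l1 q (Y $ a) * c0 (Y ^ k' $ (i - a)))"
    by (simp add: Suc fps_mult_nth l1_sum l1_mult)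
  also have "\<dots> = (\<Sum>a\<in>{0..i}. if a = i then (if k' = 0 \<and> i = q + 2 then 1 else 0) else 0)"
    by (intro sum.cong refl) (auto simp: c0_Y l1_Y c0_Ypow)
  also have "\<dots> = (if k = 1 \<and> i = q + 2 then 1 else 0)"
    using Suc by simp
  finally show ?thesis .
qed

lemma WB_Y: "WB i (Y $ i)"
proof (cases "i \<ge> 2")
  case True
  have e: "i - 2 + 2 = i" using True by simp
  have "WB i (mvar (i - 2))" using WB_mvar[of "i - 2"] unfolding e .
  then show ?thesis using True by (simp add: Y_nth)
qed (simp add: Y_nth)

lemma WB_Ypow: "WB i (Y ^ k $ i)"
proof (induction k arbitrary: i)
  case 0
  have "WB i (mconst (if i = 0 then 1 else 0))" by simp
  then show ?case by (simp add: mconst_def split: if_splits)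
next
  case (Suc k)
  have "WB i (\<Sum>a\<in>{0..i}. Y $ a * Y ^ k $ (i - a))"
  proof (rule WB_sum)
    fix a assume "a \<in> {0..i}"
    then have "WB (a + (i - a)) (Y $ a * Y ^ k $ (i - a))" by (intro WB_mult WB_Y Suc)
    then show "WB i (Y $ a * Y ^ k $ (i - a))" using \<open>a \<in> {0..i}\<close> by simp
  qed
  then show ?case by (simp add: fps_mult_nth)
qed

lemma AA_nth: "AA $ r = (if r = 0 then 1 else 0) + Y $ r" by (simp add: AA_Y)
lemma c0_AA: "c0 (AA $ r) = (if r = 0 then 1 else 0)" by (simp add: AA_nth c0_Y)
lemma l1_AA: "l1 q (AA $ r) = (if r = q + 2 then 1 else 0)" by (simp add: AA_nth l1_Y)
lemma WB_AA: "WB r (AA $ r)"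
proof -
  have "WB r (mconst (if r = 0 then 1 else 0))" by simp
  then have "WB r (if r = 0 then 1 else 0)" by (simp add: mconst_def split: if_splits)
  then show ?thesis unfolding AA_nth by (intro WB_add WB_Y)
qed

lemma c0_Phi: "c0 (Phi t $ N) = poly (psi N) (of_int t)"
proof -
  have "c0 (Phi t $ N) = (\<Sum>i\<le>N. \<Sum>k\<le>i. poly (Bp k * psi (N - i)) (of_int t) * (if k = 0 \<and> i = 0 then 1 else 0))"
    by (simp add: Phi_nth c0_sum c0_Ypow)
  also have "\<dots> = (\<Sum>i\<le>N. if i = 0 then poly (Bp 0 * psi N) (of_int t) else 0)"
    by (intro sum.cong refl) auto
  also have "\<dots> = poly (psi N) (of_int t)" by (simp add: Bp_eval)
  finally show ?thesis .
qed

lemma l1_Phi: "l1 q (Phi t $ N) = (if q + 2 \<le> N then of_int t * poly (psi (N - q - 2)) (of_int t) else 0)"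
proof -
  have "l1 q (Phi t $ N) = (\<Sum>i\<le>N. \<Sum>k\<le>i. poly (Bp k * psi (N - i)) (of_int t) * (if k = 1 \<and> i = q + 2 then 1 else 0))"
    by (simp add: Phi_nth l1_sum l1_Ypow)
  also have "\<dots> = (\<Sum>i\<le>N. if i = q + 2 then poly (Bp 1 * psi (N - i)) (of_int t) else 0)"
    by (intro sum.cong refl) (simp only: sum_ind, auto)
  also have "\<dots> = (if q + 2 \<le> N then of_int t * poly (psi (N - q - 2)) (of_int t) else 0)"
    by (simp add: Bp_eval)
  finally show ?thesis .
qed

definition DD :: "nat \<Rightarrow> nat \<Rightarrow> mpoly" where
  "DD j i = Phi (int j) $ (i + 2) - Phi (1 - int j) $ (i + 2)"

lemma lhs_expr: "j \<ge> 1 \<Longrightarrow> lhs_coeff j n = (\<Sum>i\<le>n - 1. DD j i * AA $ (n - 1 - i))"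
  unfolding lhs_coeff_def AA_def[symmetric]
  by (simp add: fps_mult_nth Gser_Phi Hser_Phi DD_def atLeast0AtMost)

lemma c0_lhs:
  assumes "j \<ge> 1" "n \<ge> 1"
  shows "c0 (lhs_coeff j n) = poly (psi (n + 1)) (of_nat j) - poly (psi (n + 1)) (1 - of_nat j)"
proof -
  have "c0 (lhs_coeff j n) = (\<Sum>i\<le>n - 1. if i = n - 1 then c0 (DD j i) else 0)"
    unfolding lhs_expr[OF assms(1)] c0_sum c0_mult c0_AA by (intro sum.cong refl) auto
  also have "\<dots> = c0 (DD j (n - 1))" by simp
  also have "\<dots> = poly (psi (n + 1)) (of_nat j) - poly (psi (n + 1)) (1 - of_nat j)"
    using assms by (simp add: DD_def c0_Phi)
  finally show ?thesis .
qed

lemma l1_lhs: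
  assumes "j \<ge> 1" "n \<ge> 1"
  shows "l1 q (lhs_coeff j n) = (\<Sum>i\<le>n - 1. if n - 1 - i = q + 2 then c0 (DD j i) else 0) + l1 q (DD j (n - 1))"
proof -
  have "l1 q (lhs_coeff j n) = (\<Sum>i\<le>n - 1. (if n - 1 - i = q + 2 then c0 (DD j i) else 0) + (if i = n - 1 then l1 q (DD j i) else 0))"
    unfolding lhs_expr[OF assms(1)] l1_sum l1_mult c0_AA l1_AA by (intro sum.cong refl) auto
  also have "\<dots> = (\<Sum>i\<le>n - 1. if n - 1 - i = q + 2 then c0 (DD j i) else 0) + l1 q (DD j (n - 1))"
    by (simp add: sum.distrib)
  finally show ?thesis .
qed

lemma l1_lhs_e:
  assumes "j \<ge> 1" "n \<ge> 1"
  shows "l1 (n - 1) (lhs_coeff j n) = 2 * of_nat j - 1"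
proof -
  have "(\<Sum>i\<le>n - 1. if n - 1 - i = n - 1 + 2 then c0 (DD j i) else 0) = 0"
    by (intro sum.neutral) auto
  moreover have "l1 (n - 1) (DD j (n - 1)) = 2 * of_nat j - 1"
    using assms by (simp add: DD_def l1_Phi)
  ultimately show ?thesis using l1_lhs[OF assms, of "n - 1"] by simp
qed

lemma l1_lhs_1:
  assumes "n \<ge> 1"
  shows "l1 q (lhs_coeff 1 n) = (if q = n - 1 then 1 else 0)"
proof -
  have "c0 (DD 1 i) = 0" for i by (simp add: DD_def c0_Phi psi_one)
  then have "(\<Sum>i\<le>n - 1. if n - 1 - i = q + 2 then c0 (DD 1 i) else 0) = 0"
    by (intro sum.neutral) auto
  moreover have "l1 q (DD 1 (n - 1)) = (if q = n - 1 then 1 else 0)"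
    using assms by (auto simp: DD_def l1_Phi psi_zero psi_one)
  ultimately show ?thesis using l1_lhs[OF _ assms, of 1 q] by simp
qed



lemma poly_le: "degree (q::rat poly) \<le> n \<Longrightarrow> poly q v = (\<Sum>l\<le>n. coeff q l * v ^ l)"
  unfolding poly_altdef
  by (rule sum.mono_neutral_left) (auto simp: coeff_eq_0)

lemma gen_antisym:
  fixes I :: "'i set" and p :: "'i \<Rightarrow> rat poly" and M :: "'i \<Rightarrow> mpoly"
  assumes "finite I" "\<And>x. x \<in> I \<Longrightarrow> degree (p x) \<le> 2 * n + 2"
  shows "(\<Sum>x\<in>I. mconst (poly (p x) r - poly (p x) (1 - r)) * M x) =
     mconst (2 * r - 1) * (\<Sum>l\<le>n. (\<Sum>x\<in>I. mconst (coeff (Qa (p x)) l) * M x) * mconst (r * (r - 1)) ^ l)"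
proof -
  have "(\<Sum>x\<in>I. mconst (poly (p x) r - poly (p x) (1 - r)) * M x) =
        (\<Sum>x\<in>I. mconst (2 * r - 1) * (\<Sum>l\<le>n. mconst (coeff (Qa (p x)) l) * mconst (r * (r - 1)) ^ l) * M x)"
  proof (intro sum.cong refl)
    fix x assume "x \<in> I"
    have "poly (p x) r - poly (p x) (1 - r) = (2 * r - 1) * (\<Sum>l\<le>n. coeff (Qa (p x)) l * (r * (r - 1)) ^ l)"
      using Qa_eval[of "p x" r] poly_le[OF Qa_deg[OF assms(2)[OF \<open>x \<in> I\<close>]]] by simp
    then show "mconst (poly (p x) r - poly (p x) (1 - r)) * M x = mconst (2 * r - 1) * (\<Sum>l\<le>n. mconst (coeff (Qa (p x)) l) * mconst (r * (r - 1)) ^ l) * M x"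
      by (simp add: mconst_mult mconst_sum mconst_power)
  qed
  also have "\<dots> = mconst (2 * r - 1) * (\<Sum>x\<in>I. \<Sum>l\<le>n. mconst (coeff (Qa (p x)) l) * M x * mconst (r * (r - 1)) ^ l)"
    by (simp add: sum_distrib_left sum_distrib_right mult_ac)
  also have "\<dots> = mconst (2 * r - 1) * (\<Sum>l\<le>n. (\<Sum>x\<in>I. mconst (coeff (Qa (p x)) l) * M x) * mconst (r * (r - 1)) ^ l)"
    by (subst sum.swap) (simp add: sum_distrib_right)
  finally show ?thesis .
qed

definition Iset :: "nat \<Rightarrow> (nat \<times> nat \<times> nat) set" where
  "Iset n = Sigma {..n - 1} (\<lambda>i. Sigma {..i + 2} (\<lambda>i'. {..i'}))"

definition pI :: "nat \<times> nat \<times> nat \<Rightarrow> rat poly" where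
  "pI x = Bp (snd (snd x)) * psi (fst x + 2 - fst (snd x))"

definition MI :: "nat \<Rightarrow> nat \<times> nat \<times> nat \<Rightarrow> mpoly" where
  "MI n x = Y ^ (snd (snd x)) $ (fst (snd x)) * AA $ (n - 1 - fst x)"

lemma sum3:
  assumes "finite A" "\<And>i. finite (B i)" "\<And>i'. finite (C i')"
  shows "(\<Sum>i\<in>A. \<Sum>i'\<in>B i. \<Sum>k\<in>C i'. f i i' k) = (\<Sum>x\<in>Sigma A (\<lambda>i. Sigma (B i) C). f (fst x) (fst (snd x)) (snd (snd x)))"
  using assms by (simp add: sum.Sigma split_def)

lemma finite_Iset: "finite (Iset n)" by (simp add: Iset_def)

lemma deg_pI: "n \<ge> 1 \<Longrightarrow> x \<in> Iset n \<Longrightarrow> degree (pI x) \<le> 2 * n + 2"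
proof -
  assume "x \<in> Iset n" "n \<ge> 1"
  then obtain i i' k where x: "x = (i, i', k)" "i \<le> n - 1" "i' \<le> i + 2" "k \<le> i'" by (auto simp: Iset_def)
  have "degree (pI x) \<le> degree (Bp k) + degree (psi (i + 2 - i'))"
    unfolding x pI_def by (simp add: degree_mult_le)
  also have "\<dots> \<le> k + 2 * (i + 2 - i')" using Bp_deg psi_deg add_mono by blast
  also have "\<dots> \<le> 2 * n + 2" using x \<open>n \<ge> 1\<close> by auto
  finally show ?thesis .
qed

lemma WB_MI: "n \<ge> 1 \<Longrightarrow> x \<in> Iset n \<Longrightarrow> WB (n + 1) (MI n x)"
proof -
  assume "x \<in> Iset n" "n \<ge> 1"
  then obtain i i' k where x: "x = (i, i', k)" "i \<le> n - 1" "i' \<le> i + 2" "k \<le> i'" by (auto simp: Iset_def)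
  have "WB (i' + (n - 1 - i)) (MI n x)" unfolding x MI_def by (simp add: WB_mult WB_Ypow WB_AA)
  then show ?thesis by (rule WB_mono) (use x \<open>n \<ge> 1\<close> in auto)
qed

lemma lhs_I:
  assumes "j \<ge> 1"
  shows "lhs_coeff j n = (\<Sum>x\<in>Iset n. mconst (poly (pI x) (of_nat j) - poly (pI x) (1 - of_nat j)) * MI n x)"
proof -
  have D: "DD j i = (\<Sum>i'\<le>i + 2. \<Sum>k\<le>i'. mconst (poly (Bp k * psi (i + 2 - i')) (of_nat j) - poly (Bp k * psi (i + 2 - i')) (1 - of_nat j)) * (Y ^ k $ i'))" for i
    by (simp add: DD_def Phi_nth mconst_diff left_diff_distrib sum_subtractf)
  have "lhs_coeff j n = (\<Sum>i\<le>n - 1. \<Sum>i'\<le>i + 2. \<Sum>k\<le>i'. mconst (poly (Bp k * psi (i + 2 - i')) (of_nat j) - poly (Bp k * psi (i + 2 - i')) (1 - of_nat j)) * (Y ^ k $ i' * AA $ (n - 1 - i)))"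
    unfolding lhs_expr[OF assms] D by (simp only: sum_distrib_right mult.assoc)
  also have "\<dots> = (\<Sum>x\<in>Iset n. mconst (poly (pI x) (of_nat j) - poly (pI x) (1 - of_nat j)) * MI n x)"
    unfolding Iset_def pI_def MI_def by (subst sum3) simp_all
  finally show ?thesis .
qed

definition U :: "nat \<Rightarrow> nat \<Rightarrow> mpoly" where
  "U n l = (\<Sum>x\<in>Iset n. mconst (coeff (Qa (pI x)) l) * MI n x)"

lemma lhs_U:
  assumes "j \<ge> 1" "n \<ge> 1"
  shows "lhs_coeff j n = mconst (2 * of_nat j - 1) * (\<Sum>l\<le>n. U n l * mconst (of_nat j * (of_nat j - 1)) ^ l)"
  unfolding lhs_I[OF assms(1)] U_def
  by (rule gen_antisym[OF finite_Iset deg_pI[OF assms(2)]])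

lemma WB_U: "n \<ge> 1 \<Longrightarrow> WB (n + 1) (U n l)"
  unfolding U_def by (intro WB_sum WB_mconst_mult WB_MI)

lemma lookup_mconst_pow: "Poly_Mapping.lookup (p * mconst w ^ l) m = Poly_Mapping.lookup p m * w ^ l"
proof -
  have e: "p * mconst w ^ l = mconst (w ^ l) * p" by (subst mult.commute) (simp only: mconst_power)
  show ?thesis unfolding e lookup_mconst_mult by (rule mult.commute)
qed

lemma lookup_mvar: "Poly_Mapping.lookup (mvar k) m = (if m = Poly_Mapping.single k 1 then 1 else 0)"
  by (auto simp: mvar_def lookup_single when_def)

lemma of_nat_2j: "j \<ge> 1 \<Longrightarrow> (of_nat (2 * j - 1) :: mpoly) = mconst (2 * of_nat j - 1)"
proof -
  assume "j \<ge> 1"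
  then have "(of_nat (2 * j - 1) :: rat) = 2 * of_nat j - 1" by (simp add: of_nat_diff)
  then show ?thesis by (metis mconst_of_nat)
qed

lemma of_nat_v: "j \<ge> 1 \<Longrightarrow> (of_nat (j * (j - 1)) :: mpoly) = mconst (of_nat j * (of_nat j - 1))"
proof -
  assume "j \<ge> 1"
  then have "(of_nat (j * (j - 1)) :: rat) = of_nat j * (of_nat j - 1)" by (simp add: of_nat_diff)
  then show ?thesis by (metis mconst_of_nat)
qed

lemma S_exists:
  assumes n: "n \<ge> 1"
  shows "\<exists>T. S_prop n T"
proof -
  define e where "e = Poly_Mapping.single (n - 1) (1::nat)"
  define T where "T l = (if l \<le> n then U n l - mconst (Poly_Mapping.lookup (U n l) e) * mvar (n - 1) else 0)" for l
  have lkT: "Poly_Mapping.lookup (T l) m = Poly_Mapping.lookup (U n l) m - Poly_Mapping.lookup (U n l) e * (if m = e then 1 else 0)"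
    if "l \<le> n" for l m
    using that by (simp add: T_def lookup_minus lookup_mconst_mult lookup_mvar e_def)
  have vars: "vars_in (T l) {..<n - 1}" if "l \<le> n" for l
    unfolding vars_in_def
  proof
    fix m assume m: "m \<in> Poly_Mapping.keys (T l)"
    then have nz: "Poly_Mapping.lookup (T l) m \<noteq> 0" by (simp add: in_keys_iff)
    have "m \<noteq> e"
    proof
      assume "m = e" then show False using nz lkT[OF that] by simp
    qed
    then have "Poly_Mapping.lookup (U n l) m \<noteq> 0" using nz lkT[OF that] by simp
    then have "wt m \<le> n + 1" using WB_U[OF n, of l] by (simp add: WB_def in_keys_iff)
    show "Poly_Mapping.keys m \<subseteq> {..<n - 1}"
    proof
      fix k assume k: "k \<in> Poly_Mapping.keys m"
      show "k \<in> {..<n - 1}"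
      proof (rule ccontr)
        assume "k \<notin> {..<n - 1}"
        then have "n - 1 \<le> k" by simp
        then have "m = e" using big_var[OF \<open>wt m \<le> n + 1\<close> k _ n] by (simp add: e_def)
        then show False using \<open>m \<noteq> e\<close> by simp
      qed
    qed
  qed
  have E: "(\<Sum>l\<le>n. Poly_Mapping.lookup (U n l) e * (of_nat j * (of_nat j - 1)) ^ l) = (1::rat)" if j: "j \<ge> 1" for j
  proof -
    have "Poly_Mapping.lookup (lhs_coeff j n) e = 2 * of_nat j - 1"
      using l1_lhs_e[OF j n] by (simp add: l1_def e_def)
    moreover have "Poly_Mapping.lookup (lhs_coeff j n) e = (2 * of_nat j - 1) * (\<Sum>l\<le>n. Poly_Mapping.lookup (U n l) e * (of_nat j * (of_nat j - 1)) ^ l)"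
      unfolding lhs_U[OF j n] by (simp add: lookup_mconst_mult lookup_sum lookup_mconst_pow)
    moreover have "(2 * of_nat j - 1 :: rat) \<noteq> 0" using j by simp
    ultimately show ?thesis by simp
  qed
  have ident: "lhs_coeff j n = of_nat (2 * j - 1) * (mvar (n - 1) + T 0 + (\<Sum>i = 1..n. T i * of_nat (j * (j - 1)) ^ i))"
    if j: "j \<ge> 1" for j
  proof -
    let ?w = "mconst (of_nat j * (of_nat j - 1) :: rat)"
    have "(\<Sum>l\<le>n. U n l * ?w ^ l) = (\<Sum>l\<le>n. T l * ?w ^ l + mvar (n - 1) * mconst (Poly_Mapping.lookup (U n l) e * (of_nat j * (of_nat j - 1)) ^ l))"
      by (intro sum.cong refl) (simp add: T_def algebra_simps mconst_mult mconst_power)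
    also have "\<dots> = (\<Sum>l\<le>n. T l * ?w ^ l) + mvar (n - 1)"
      using E[OF j] by (simp add: sum.distrib sum_distrib_left[symmetric] mconst_sum[symmetric])
    also have "(\<Sum>l\<le>n. T l * ?w ^ l) = T 0 + (\<Sum>l = 1..n. T l * ?w ^ l)"
      by (simp add: atMost_atLeast0 sum.atLeast_Suc_atMost)
    finally show ?thesis
      unfolding lhs_U[OF j n] of_nat_2j[OF j] of_nat_v[OF j] by (simp add: algebra_simps)
  qed
  have "S_prop n T"
    unfolding S_prop_def using vars ident by (auto simp: T_def)
  then show ?thesis by blast
qed

lemma S_unique:
  assumes n: "n \<ge> 1" and T1: "S_prop n T1" and T2: "S_prop n T2"
  shows "T1 = T2"
proof
  fix i
  show "T1 i = T2 i"
  proof (cases "i \<le> n")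
    case False then show ?thesis using T1 T2 by (simp add: S_prop_def)
  next
    case True
    show ?thesis
    proof (rule poly_mapping_eqI)
      fix m
      define d where "d i = Poly_Mapping.lookup (T1 i) m - Poly_Mapping.lookup (T2 i) m" for i
      define R where "R = (\<Sum>i\<le>n. monom (d i) i)"
      have lkp: "Poly_Mapping.lookup (T i * of_nat k ^ i) m = Poly_Mapping.lookup (T i) m * of_nat k ^ i" for T :: "nat \<Rightarrow> mpoly" and k i
        using lookup_mconst_pow[of "T i" "of_nat k" i m] by (simp add: mconst_of_nat)
      have root: "poly R (of_nat (j * (j - 1))) = 0" if j: "j \<ge> 1" for j
      proof -
        have "of_nat (2 * j - 1) * (mvar (n - 1) + T1 0 + (\<Sum>i = 1..n. T1 i * of_nat (j * (j - 1)) ^ i))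
            = of_nat (2 * j - 1) * (mvar (n - 1) + T2 0 + (\<Sum>i = 1..n. T2 i * of_nat (j * (j - 1)) ^ i))"
        proof -
          have a: "lhs_coeff j n = of_nat (2 * j - 1) * (mvar (n - 1) + T1 0 + (\<Sum>i = 1..n. T1 i * of_nat (j * (j - 1)) ^ i))"
            using T1 j unfolding S_prop_def by blast
          have b: "lhs_coeff j n = of_nat (2 * j - 1) * (mvar (n - 1) + T2 0 + (\<Sum>i = 1..n. T2 i * of_nat (j * (j - 1)) ^ i))"
            using T2 j unfolding S_prop_def by blast
          show ?thesis using trans[OF sym[OF a] b] .
        qed
        moreover have "(of_nat (2 * j - 1) :: mpoly) \<noteq> 0"
        proof -
          have "2 * j - 1 \<noteq> 0" using j by simp
          then show ?thesis by (simp only: of_nat_eq_0_iff not_False_eq_True)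
        qed
        ultimately have eq: "T1 0 + (\<Sum>i = 1..n. T1 i * of_nat (j * (j - 1)) ^ i) = T2 0 + (\<Sum>i = 1..n. T2 i * of_nat (j * (j - 1)) ^ i)"
          by simp
        have "(\<Sum>i\<le>n. Poly_Mapping.lookup (T1 i) m * of_nat (j * (j - 1)) ^ i) = (\<Sum>i\<le>n. Poly_Mapping.lookup (T2 i) m * of_nat (j * (j - 1)) ^ i)"
          using arg_cong[OF eq, of "\<lambda>p. Poly_Mapping.lookup p m"]
          by (simp only: lookup_add lookup_sum lkp) (simp add: atMost_atLeast0 sum.atLeast_Suc_atMost del: of_nat_mult)
        then show ?thesis
          by (simp add: R_def poly_sum poly_monom d_def sum_subtractf algebra_simps)
      qed
      have "R = 0"
      proof (rule ccontr)
        assume "R \<noteq> 0"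
        then have fin: "finite {x. poly R x = 0}" by (rule poly_roots_finite)
        have sm: "strict_mono (\<lambda>k::nat. (k + 1) * k)"
          unfolding strict_mono_Suc_iff by simp
        have "inj (\<lambda>k::nat. (of_nat ((k + 1) * k) :: rat))"
        proof (rule injI)
          have i1: "inj (\<lambda>k::nat. (k + 1) * k)" using strict_mono_imp_inj_on[OF sm] .
          fix x y :: nat assume "(of_nat ((x + 1) * x) :: rat) = of_nat ((y + 1) * y)"
          then have "(x + 1) * x = (y + 1) * y" by (simp only: of_nat_eq_iff)
          then show "x = y" using i1 unfolding inj_def by blast
        qed
        then have "infinite (range (\<lambda>k::nat. (of_nat ((k + 1) * k) :: rat)))" by (rule range_inj_infinite)
        moreover have "range (\<lambda>k::nat. (of_nat ((k + 1) * k) :: rat)) \<subseteq> {x. poly R x = 0}"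
        proof
          fix x assume "x \<in> range (\<lambda>k::nat. (of_nat ((k + 1) * k) :: rat))"
          then obtain k where "x = of_nat ((k + 1) * k)" by auto
          then show "x \<in> {x. poly R x = 0}" using root[of "k + 1"] by simp
        qed
        ultimately show False using fin finite_subset by blast
      qed
      then have "coeff R i = 0" by simp
      moreover have "coeff R i = d i"
      proof -
        have "coeff R i = (\<Sum>l\<le>n. if l = i then d l else 0)"
          unfolding R_def coeff_sum by (intro sum.cong refl) (simp add: coeff_monom)
        also have "\<dots> = d i" using True by simp
        finally show ?thesis .
      qed
      ultimately show "Poly_Mapping.lookup (T1 i) m = Poly_Mapping.lookup (T2 i) m" by (simp add: d_def)
    qed
  qed
qed

lemma S_prop_S:
  assumes n: "n \<ge> 1" shows "S_prop n (S n)"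
proof -
  obtain T where T: "S_prop n T" using S_exists[OF n] by blast
  have ex1: "\<exists>!T. S_prop n T"
  proof (rule ex1I[of _ T])
    show "S_prop n T" by (rule T)
    fix T' assume "S_prop n T'" then show "T' = T" using S_unique[OF n _ T] by blast
  qed
  show ?thesis unfolding S_def by (rule theI'[OF ex1])
qed


lemma S0_ord2:
  assumes n: "n \<ge> 1"
  shows "ord2 (S n 0)"
proof -
  have A: "\<forall>j::nat. j \<ge> 1 \<longrightarrow> lhs_coeff j n = of_nat (2 * j - 1) * (mvar (n - 1) + S n 0 + (\<Sum>i = 1..n. S n i * of_nat (j * (j - 1)) ^ i))"
    using S_prop_S[OF n] unfolding S_prop_def by blast
  have "lhs_coeff 1 n = of_nat (2 * 1 - 1) * (mvar (n - 1) + S n 0 + (\<Sum>i = 1..n. S n i * of_nat (1 * (1 - 1)) ^ i))"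
    by (rule A[rule_format]) simp
  also have "(\<Sum>i = 1..n. S n i * of_nat (1 * (1 - 1)) ^ i) = 0"
    by (intro sum.neutral) auto
  finally have L: "lhs_coeff 1 n = mvar (n - 1) + S n 0" by simp
  have "c0 (lhs_coeff 1 n) = 0"
    using c0_lhs[of 1 n] n psi_one[of "n + 1"] by simp
  then have "c0 (S n 0) = 0" using L by simp
  moreover have "l1 q (S n 0) = 0" for q
    using l1_lhs_1[OF n, of q] L by simp
  ultimately show ?thesis by (simp add: ord2_def)
qed

lemma sumS:
  assumes n: "n \<ge> 1"
  shows "(\<Sum>i = 1..n. 3 * 2 ^ i * c0 (S n i)) = (-1) ^ (n - 1)"
proof -
  have L: "lhs_coeff 2 n = of_nat (2 * 2 - 1) * (mvar (n - 1) + S n 0 + (\<Sum>i = 1..n. S n i * of_nat (2 * (2 - 1)) ^ i))"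
  proof -
    have A: "\<forall>j::nat. j \<ge> 1 \<longrightarrow> lhs_coeff j n = of_nat (2 * j - 1) * (mvar (n - 1) + S n 0 + (\<Sum>i = 1..n. S n i * of_nat (j * (j - 1)) ^ i))"
      using S_prop_S[OF n] unfolding S_prop_def by blast
    show ?thesis by (rule A[rule_format]) simp
  qed
  have "c0 (lhs_coeff 2 n) = 3 * (\<Sum>i = 1..n. c0 (S n i) * 2 ^ i)"
    unfolding L using S0_ord2[OF n]
    by (simp add: c0_mult c0_sum c0_power ord2_def)
  moreover have "c0 (lhs_coeff 2 n) = (-1) ^ (n - 1)"
  proof -
    have "c0 (lhs_coeff 2 n) = poly (psi (n + 1)) 2 - poly (psi (Suc n)) (-1)"
      using c0_lhs[of 2 n] n by simp
    also have "\<dots> = (-1) ^ (n + 1)" using n by (simp add: psi_two psi_mone)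
    also have "\<dots> = (-1) ^ (n - 1)"
    proof -
      obtain k where "n = Suc k" using n by (cases n) auto
      then show ?thesis by simp
    qed
    finally show ?thesis .
  qed
  ultimately show ?thesis by (simp add: sum_distrib_left mult_ac)
qed

lemma Clist_len: "length (Clist m) = m"
  by (induction m) auto

lemma Clist_nth: "i < m \<Longrightarrow> Clist m ! i = Cstep (Clist i)"
proof (induction m)
  case (Suc m)
  then show ?case by (cases "i < m") (auto simp: nth_append Clist_len less_Suc_eq)
qed simp

lemma Chat_eq: "m \<ge> 1 \<Longrightarrow> Chat m = Cstep (Clist (m - 1))"
  by (simp add: Chat_def Clist_nth)

definition sig :: "nat \<Rightarrow> nat \<Rightarrow> mpoly" where
  "sig m k = (if k < m - 1 then Chat (Suc k) else 0)"

lemma Chat_unf: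
  assumes "m \<ge> 1"
  shows "Chat m = - msubst (sig m) (S m 0) + (\<Sum>i = 1..m. 3 * 2 ^ i * msubst (sig m) (S m i) * P i)"
proof -
  have s: "(\<lambda>k. if k < length (Clist (m - 1)) then Clist (m - 1) ! k else 0) = sig m"
    by (auto simp: sig_def Clist_len Clist_nth Chat_eq fun_eq_iff)
  have "Suc (length (Clist (m - 1))) = m" using assms by (simp add: Clist_len)
  then show ?thesis unfolding Chat_eq[OF assms] Cstep_def Let_def s by simp
qed

lemma Chat_c0: "m \<ge> 1 \<Longrightarrow> c0 (Chat m) = 0"
proof (induction m rule: less_induct)
  case (less m)
  have sig0: "c0 (sig m k) = 0" for k
    using less by (simp add: sig_def)
  show ?case
    unfolding Chat_unf[OF less.prems]
    using S0_ord2[OF less.prems] by (simp add: c0_sum c0_mult c0_msubst[OF sig0] c0_P ord2_def)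
qed

lemma Chat_l1:
  assumes m: "m \<ge> 1"
  shows "l1 k (Chat m) = (\<Sum>i = 1..m. 3 * 2 ^ i * c0 (S m i) * (if k = i - 1 then 1 else 0))"
proof -
  have sig0: "c0 (sig m k) = 0" for k
    by (simp add: sig_def Chat_c0)
  have o: "l1 k (msubst (sig m) (S m 0)) = 0"
    using ord2_msubst[OF sig0 S0_ord2[OF m]] by (simp add: ord2_def)
  have t: "l1 k (3 * 2 ^ i * msubst (sig m) (S m i) * P i) = 3 * 2 ^ i * c0 (S m i) * (if k = i - 1 then 1 else 0)"
    if "i \<in> {1..m}" for i
  proof -
    have "P i = P (Suc (i - 1))" using that by simp
    then have "l1 k (P i) = (if k = i - 1 then 1 else 0)" using l1_P[of k "i - 1"] by simp
    then show ?thesis by (simp add: l1_mult c0_mult c0_power c0_P c0_msubst[OF sig0])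
  qed
  show ?thesis
    unfolding Chat_unf[OF m] l1_add l1_uminus o l1_sum using t by simp
qed

theorem proposition4p5:
  fixes n :: nat
  assumes "n \<ge> 1"
  shows "(\<Sum>k<n. mcoeff (Chat n) (Poly_Mapping.single k 1)) = (-1) ^ (n - 1)"
proof -
  have "(\<Sum>k<n. mcoeff (Chat n) (Poly_Mapping.single k 1)) = (\<Sum>k<n. l1 k (Chat n))"
    by (simp add: mcoeff_def l1_def)
  also have "\<dots> = (\<Sum>k<n. \<Sum>i = 1..n. 3 * 2 ^ i * c0 (S n i) * (if k = i - 1 then 1 else 0))"
    using Chat_l1[OF assms] by simp
  also have "\<dots> = (\<Sum>i = 1..n. \<Sum>k<n. 3 * 2 ^ i * c0 (S n i) * (if k = i - 1 then 1 else 0))"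
    by (rule sum.swap)
  also have "\<dots> = (\<Sum>i = 1..n. 3 * 2 ^ i * c0 (S n i))"
  proof (intro sum.cong refl)
    fix i assume "i \<in> {1..n}"
    then have "i - 1 < n" by auto
    then show "(\<Sum>k<n. 3 * 2 ^ i * c0 (S n i) * (if k = i - 1 then 1 else 0)) = 3 * 2 ^ i * c0 (S n i)"
      by (simp add: if_distrib[where f="\<lambda>x. _ * x"] cong: if_cong)
  qed
  also have "\<dots> = (-1) ^ (n - 1)" by (rule sumS[OF assms])
  finally show ?thesis .
qed


end
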